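(* Let $X$ be a crowded (dense-in-itself) topological space containing an open dense subset $D$ which is metrizable. Then $X$ is $Disc(X)$-selectively pseudocompact if and only if $X$ is $Nwd(X)$-selectively pseudocompact, where $Disc(X)$ is the family of discrete subsets of $X$ and $Nwd(X)$ the family of nowhere dense subsets of $X$.
   Context: For a topological space $X$ and $\mathcal A\subseteq\mathcal P(X)$, $X$ is called $\mathcal A$-selectively pseudocompact if for every sequence $\langle U_n:n\in\omega\rangle$ of pairwise disjoint non-empty open subsets of $X$ one can choose sets $A_n\in\mathcal A$ with $A_n\subseteq U_n$ such that the family $\{A_n:n\in\omega\}$ has an accumulation point, i.e. there is a point $x\in X$ every neighbourhood of which meets $A_n$ for infinitely many $n$. *)

theory Defs
  imports "HOL-Analysis.Analysis"
begin

definition crowded :: "'a topology \<Rightarrow> bool" where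
  "crowded X \<longleftrightarrow> (\<forall>x\<in>topspace X. \<not> openin X {x})"

definition Disc :: "'a topology \<Rightarrow> 'a set set" where
  "Disc X = {A. A \<subseteq> topspace X \<and> subtopology X A = discrete_topology A}"

definition Nwd :: "'a topology \<Rightarrow> 'a set set" where
  "Nwd X = {A. A \<subseteq> topspace X \<and> X interior_of (X closure_of A) = {}}"

definition accumulation_point_of_family :: "'a topology \<Rightarrow> 'a \<Rightarrow> (nat \<Rightarrow> 'a set) \<Rightarrow> bool" where
  "accumulation_point_of_family X x A \<longleftrightarrow>
     x \<in> topspace X \<and> (\<forall>V. openin X V \<and> x \<in> V \<longrightarrow> infinite {n. V \<inter> A n \<noteq> {}})"

definition selectively_pseudocompact :: "'a set set \<Rightarrow> 'a topology \<Rightarrow> bool" where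
  "selectively_pseudocompact \<A> X \<longleftrightarrow>
     (\<forall>U :: nat \<Rightarrow> 'a set.
        (\<forall>n. openin X (U n) \<and> U n \<noteq> {}) \<and> (\<forall>m n. m \<noteq> n \<longrightarrow> U m \<inter> U n = {}) \<longrightarrow>
        (\<exists>A :: nat \<Rightarrow> 'a set. (\<forall>n. A n \<in> \<A> \<and> A n \<subseteq> U n) \<and>
            (\<exists>x. accumulation_point_of_family X x A)))"

end

theory Submission
  imports Defs
begin

lemma (in Metric_space) discrete_dense_aux:
  assumes AU: "A \<subseteq> U" and U: "openin mtopology U" and Ane: "A \<noteq> {}"
    and nwd: "\<And>V. openin mtopology V \<Longrightarrow> V \<subseteq> mtopology closure_of A \<Longrightarrow> V = {}"
  shows "\<exists>B \<subseteq> U. (\<forall>b\<in>B. \<exists>r>0. mball b r \<inter> B = {b}) \<and> (\<forall>a\<in>A. \<forall>e>0. \<exists>b\<in>B. d a b < e)"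
proof -
  have UM: "U \<subseteq> M" using U openin_mtopology by blast
  have AM: "A \<subseteq> M" using AU UM by blast
  define \<rho> where "\<rho> y = Inf (d y ` A)" for y
  define G where "G = U - mtopology closure_of A"
  have bdd: "bdd_below (d y ` A)" for y
    by (rule bdd_belowI[of _ 0]) (use AM nonneg in auto)
  have rho_le: "\<rho> y \<le> d y a" if "a \<in> A" for y a
    unfolding \<rho>_def using bdd that by (simp add: cInf_lower)
  have rho_lip: "\<rho> b \<le> d b b' + \<rho> b'" if "b \<in> M" "b' \<in> M" for b b'
  proof -
    have "\<rho> b - d b b' \<le> \<rho> b'"
      unfolding \<rho>_def[of b'] 
    proof (rule cInf_greatest)
      show "d b' ` A \<noteq> {}" using Ane by simp
      fix x assume "x \<in> d b' ` A"
      then obtain a where a: "a \<in> A" "x = d b' a" by auto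
      have "\<rho> b \<le> d b a" using rho_le a by blast
      also have "\<dots> \<le> d b b' + d b' a" using triangle that AM a by blast
      finally show "\<rho> b - d b b' \<le> x" using a by simp
    qed
    then show ?thesis by simp
  qed
  have rho_pos: "\<rho> y > 0" if "y \<in> G" for y
  proof -
    have "openin mtopology (M - mtopology closure_of A)"
      by (metis closedin_closure_of openin_diff openin_topspace topspace_mtopology)
    moreover have yM: "y \<in> M - mtopology closure_of A" using that UM unfolding G_def by blast
    ultimately obtain r where r: "r > 0" "mball y r \<subseteq> M - mtopology closure_of A"
      unfolding openin_mtopology by blast
    have "r \<le> \<rho> y" unfolding \<rho>_def
    proof (rule cInf_greatest)
      show "d y ` A \<noteq> {}" using Ane by simp
      fix x assume "x \<in> d y ` A"
      then obtain a where a: "a \<in> A" "x = d y a" by auto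
      have "a \<in> mtopology closure_of A" using closure_of_subset[of A mtopology] AM a by auto
      then have "a \<notin> mball y r" using r by blast
      then show "r \<le> x" using a AM yM by auto
    qed
    then show ?thesis using r by linarith
  qed
  define \<F> where "\<F> = {B. B \<subseteq> G \<and> (\<forall>b\<in>B. \<forall>b'\<in>B. b \<noteq> b' \<longrightarrow> min (\<rho> b) (\<rho> b') \<le> 2 * d b b')}"
  have "\<forall>C\<in>chains \<F>. \<Union>C \<in> \<F>"
  proof
    fix C assume C: "C \<in> chains \<F>"
    show "\<Union>C \<in> \<F>" unfolding \<F>_def
    proof (intro CollectI conjI ballI impI)
      show "\<Union>C \<subseteq> G" using C unfolding chains_def \<F>_def by blast
      fix b b' assume b: "b \<in> \<Union>C" and b': "b' \<in> \<Union>C" and ne: "b \<noteq> b'"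
      then obtain X1 X2 where X: "X1 \<in> C" "X2 \<in> C" "b \<in> X1" "b' \<in> X2" by blast
      then have "X1 \<subseteq> X2 \<or> X2 \<subseteq> X1" using C unfolding chains_def chain_subset_def by blast
      then obtain Y where "Y \<in> C" "b \<in> Y" "b' \<in> Y" using X by blast
      moreover have "Y \<in> \<F>" using C \<open>Y \<in> C\<close> unfolding chains_def by blast
      ultimately show "min (\<rho> b) (\<rho> b') \<le> 2 * d b b'" using ne unfolding \<F>_def by blast
    qed
  qed
  from Zorn_Lemma[OF this] obtain B where B: "B \<in> \<F>" and max: "\<And>Y. Y \<in> \<F> \<Longrightarrow> B \<subseteq> Y \<Longrightarrow> Y = B"
    by blast
  have BG: "B \<subseteq> G" and Bsep: "\<And>b b'. b \<in> B \<Longrightarrow> b' \<in> B \<Longrightarrow> b \<noteq> b' \<Longrightarrow> min (\<rho> b) (\<rho> b') \<le> 2 * d b b'"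
    using B unfolding \<F>_def by auto
  have GU: "G \<subseteq> U" unfolding G_def by blast
  have BM: "B \<subseteq> M" using BG GU UM by blast
  show ?thesis
  proof (intro exI[of _ B] conjI ballI allI impI)
    show "B \<subseteq> U" using BG GU by blast
  next
    fix b assume b: "b \<in> B"
    have pos: "\<rho> b > 0" using rho_pos b BG by blast
    show "\<exists>r>0. mball b r \<inter> B = {b}"
    proof (intro exI[of _ "\<rho> b / 4"] conjI)
      show "\<rho> b / 4 > 0" using pos by simp
      show "mball b (\<rho> b / 4) \<inter> B = {b}"
      proof
        show "{b} \<subseteq> mball b (\<rho> b / 4) \<inter> B" using b BM pos by auto
        show "mball b (\<rho> b / 4) \<inter> B \<subseteq> {b}"
        proof
          fix b' assume b': "b' \<in> mball b (\<rho> b / 4) \<inter> B"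
          show "b' \<in> {b}"
          proof (rule ccontr)
            assume "b' \<notin> {b}"
            then have ne: "b \<noteq> b'" by auto
            have dl: "d b b' < \<rho> b / 4" using b' by auto
            have b'M: "b' \<in> M" "b' \<in> B" using b' by auto
            have bM: "b \<in> M" using b BM by blast
            have "\<rho> b \<le> d b b' + \<rho> b'" using rho_lip[OF bM b'M(1)] .
            moreover have "min (\<rho> b) (\<rho> b') \<le> 2 * d b b'" using Bsep[OF b b'M(2) ne] .
            ultimately show False using dl pos by (simp add: min_def split: if_splits)
          qed
        qed
      qed
    qed
  next
    fix a e assume a: "a \<in> A" and e: "(0::real) < e"
    have aM: "a \<in> M" using a AM by blast
    have "openin mtopology (mball a (e/2) \<inter> U)" using U by blast
    moreover have "a \<in> mball a (e/2) \<inter> U" using a aM AU e by auto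
    ultimately have "\<not> (mball a (e/2) \<inter> U \<subseteq> mtopology closure_of A)" using nwd by blast
    then obtain y where y: "y \<in> mball a (e/2)" "y \<in> U" "y \<notin> mtopology closure_of A" by blast
    have yG: "y \<in> G" using y unfolding G_def by blast
    have yM: "y \<in> M" using y UM by blast
    have ray: "\<rho> y \<le> d y a" using rho_le a by blast
    have day: "d a y < e/2" using y by auto
    show "\<exists>b\<in>B. d a b < e"
    proof (cases "y \<in> B")
      case True then show ?thesis using day e by (intro bexI[of _ y]) auto
    next
      case False
      have "insert y B \<notin> \<F>"
      proof
        assume "insert y B \<in> \<F>"
        then have "insert y B = B" using max by blast
        then show False using False by blast
      qed
      then obtain b where b: "b \<in> B" "b \<noteq> y" "\<not> min (\<rho> y) (\<rho> b) \<le> 2 * d y b"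
        using yG BG Bsep unfolding \<F>_def by (auto simp: min.commute commute)
      have bM: "b \<in> M" using b BM by blast
      have "d y b < \<rho> y / 2" using b(3) by (simp add: min_def split: if_splits)
      moreover have "d a b \<le> d a y + d y b" using triangle aM yM bM by blast
      moreover have "d y a = d a y" using commute aM yM by blast
      ultimately have "d a b < e" using ray day e by linarith
      then show ?thesis using b by blast
    qed
  qed
qed


lemma disc_imp_nwd:
  assumes cr: "crowded X" and D: "openin X D" and dense: "X closure_of D = topspace X"
    and t1: "t1_space (subtopology X D)"
    and AD: "A \<subseteq> D" and disc: "subtopology X A = discrete_topology A"
  shows "X interior_of (X closure_of A) = {}"
proof (rule ccontr)
  define W where "W = X interior_of (X closure_of A)"
  assume "X interior_of (X closure_of A) \<noteq> {}"
  then have Wne: "W \<noteq> {}" unfolding W_def .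
  have Wo: "openin X W" unfolding W_def by simp
  have WcA: "W \<subseteq> X closure_of A" unfolding W_def by (rule interior_of_subset)
  have "D \<inter> W \<noteq> {}" using dense Wo Wne dense_intersects_open by metis
  then obtain q where q: "q \<in> D" "q \<in> W" by blast
  have WDo: "openin X (W \<inter> D)" using Wo D by (rule openin_Int)
  have qcl: "q \<in> X closure_of A" using q WcA by blast
  have qWD: "q \<in> W \<inter> D" using q by blast
  have "\<forall>T. q \<in> T \<and> openin X T \<longrightarrow> (\<exists>y. y \<in> A \<and> y \<in> T)"
    using qcl by (simp add: in_closure_of)
  then have "\<exists>y. y \<in> A \<and> y \<in> W \<inter> D" by (rule allE[where x="W \<inter> D"]) (use WDo qWD in blast)
  then obtain a where a: "a \<in> A" "a \<in> W \<inter> D" by blast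
  have "openin (subtopology X A) {a}" using disc a by simp
  then obtain T where T: "openin X T" "{a} = T \<inter> A" unfolding openin_subtopology by blast
  define Ob where "Ob = W \<inter> D \<inter> T"
  have Oo: "openin X Ob" unfolding Ob_def using WDo T(1) by (rule openin_Int)
  have aO: "a \<in> Ob" unfolding Ob_def using a T by blast
  have atop: "a \<in> topspace X" using openin_subset[OF Oo] aO by blast
  have "\<not> openin X {a}" using cr atop unfolding crowded_def by blast
  then have "Ob \<noteq> {a}" using Oo by metis
  then obtain c where c: "c \<in> Ob" "c \<noteq> a" using aO by blast
  have OD: "Ob \<subseteq> D" unfolding Ob_def by blast
  have atopD: "a \<in> topspace (subtopology X D)" using atop a by simp
  have "closedin (subtopology X D) {a}"
    using t1 atopD t1_space_closedin_singleton by metis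
  moreover have "openin (subtopology X D) Ob" using Oo OD D openin_open_subtopology by metis
  ultimately have "openin (subtopology X D) (Ob - {a})" by (simp add: openin_diff)
  then have O'o: "openin X (Ob - {a})" using D openin_open_subtopology by metis
  have cO': "c \<in> Ob - {a}" using c by blast
  have "Ob - {a} \<subseteq> X closure_of A" unfolding Ob_def using WcA by blast
  then have "c \<in> X closure_of A" using cO' by blast
  then have "\<forall>T. c \<in> T \<and> openin X T \<longrightarrow> (\<exists>y. y \<in> A \<and> y \<in> T)"
    by (simp add: in_closure_of)
  then have "\<exists>y. y \<in> A \<and> y \<in> Ob - {a}"
    by (rule allE[where x="Ob - {a}"]) (use O'o cO' in blast)
  then obtain a' where a': "a' \<in> A" "a' \<in> Ob - {a}" by blast
  have "a' \<in> T \<inter> A" using a' unfolding Ob_def by blast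
  then have "a' = a" using T(2) by blast
  then show False using a' by blast
qed

lemma nwd_to_disc:
  assumes MS: "Metric_space M d" and MT: "Metric_space.mtopology M d = subtopology X D"
    and D: "openin X D" and V: "openin X V" "V \<subseteq> D" and AV: "A \<subseteq> V"
    and nwd: "X interior_of (X closure_of A) = {}"
  shows "\<exists>B \<subseteq> V. B \<in> Disc X \<and> (\<forall>a\<in>A. \<forall>W. openin X W \<and> a \<in> W \<longrightarrow> W \<inter> B \<noteq> {})"
proof (cases "A = {}")
  case True
  have "subtopology X {} = discrete_topology {}"
    by (simp add: subtopology_eq_discrete_topology_empty)
  then show ?thesis using True by (intro exI[of _ "{}"]) (auto simp: Disc_def)
next
  case False
  interpret Metric_space M d by (rule MS)
  have opM: "openin mtopology S \<longleftrightarrow> openin X S \<and> S \<subseteq> D" for S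
    using MT D openin_open_subtopology by metis
  have Vtop: "V \<subseteq> topspace X" using V openin_subset by blast
  have MD: "M = topspace X \<inter> D" using MT topspace_mtopology by (metis topspace_subtopology)
  have VM: "V \<subseteq> M" using MD Vtop V by blast
  have nwdM: "W = {}" if "openin mtopology W" "W \<subseteq> mtopology closure_of A" for W
  proof -
    have "W \<subseteq> X closure_of A" using that(2) closure_of_subtopology_subset[of X D A] unfolding MT by blast
    moreover have "openin X W" using that(1) opM by blast
    ultimately have "W \<subseteq> X interior_of (X closure_of A)" by (rule interior_of_maximal)
    then show ?thesis using nwd by blast
  qed
  have "openin mtopology V" using opM V by blast
  from discrete_dense_aux[OF AV this False nwdM]
  obtain B where BV: "B \<subseteq> V" and Bd: "\<forall>b\<in>B. \<exists>r>0. mball b r \<inter> B = {b}"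
    and Bden: "\<forall>a\<in>A. \<forall>e>0. \<exists>b\<in>B. d a b < e" by blast
  have "subtopology X B = discrete_topology B"
    unfolding eq_commute[of "subtopology X B"] discrete_topology_unique
  proof (intro conjI ballI)
    show "topspace (subtopology X B) = B" using BV Vtop by auto
    fix b assume b: "b \<in> B"
    then obtain r where "r > 0" "mball b r \<inter> B = {b}" using Bd by blast
    moreover have "openin X (mball b r)" using opM openin_mball by blast
    ultimately show "openin (subtopology X B) {b}"
      unfolding openin_subtopology by metis
  qed
  then have BD: "B \<in> Disc X" unfolding Disc_def using BV Vtop by blast
  have "W \<inter> B \<noteq> {}" if a: "a \<in> A" and W: "openin X W" "a \<in> W" for a W
  proof -
    have "openin mtopology (W \<inter> D)" using opM W D by blast
    moreover have aWD: "a \<in> W \<inter> D" using a W AV V by blast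
    ultimately obtain r where r: "r > 0" "mball a r \<subseteq> W \<inter> D"
      unfolding openin_mtopology by blast
    obtain b where b: "b \<in> B" "d a b < r" using Bden a r by blast
    have "b \<in> mball a r" using b BV VM aWD AV a by auto
    then show ?thesis using r b by blast
  qed
  then show ?thesis using BV BD by blast
qed

theorem proposition1p6:
  fixes X :: "'a topology" and D :: "'a set"
  assumes "crowded X"
    and "openin X D" and "X closure_of D = topspace X"
    and "metrizable_space (subtopology X D)"
  shows "selectively_pseudocompact (Disc X) X \<longleftrightarrow> selectively_pseudocompact (Nwd X) X"
proof -
  have dense: "D \<inter> T \<noteq> {}" if "openin X T" "T \<noteq> {}" for T
    using assms(3) that dense_intersects_open by blast
  have red: "(\<forall>n. openin X (U n \<inter> D) \<and> U n \<inter> D \<noteq> {}) \<and> (\<forall>m n. m \<noteq> n \<longrightarrow> (U m \<inter> D) \<inter> (U n \<inter> D) = {})"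
    if "(\<forall>n. openin X (U n) \<and> U n \<noteq> {}) \<and> (\<forall>m n. m \<noteq> n \<longrightarrow> U m \<inter> U n = {})" for U
  proof -
    have "openin X (U n \<inter> D) \<and> U n \<inter> D \<noteq> {}" for n
    proof
      show "openin X (U n \<inter> D)" using that assms(2) by blast
      show "U n \<inter> D \<noteq> {}" using that dense[of "U n"] by blast
    qed
    moreover have "(U m \<inter> D) \<inter> (U n \<inter> D) = {}" if "m \<noteq> n" for m n
      using that \<open>(\<forall>n. openin X (U n) \<and> U n \<noteq> {}) \<and> (\<forall>m n. m \<noteq> n \<longrightarrow> U m \<inter> U n = {})\<close> by blast
    ultimately show ?thesis by blast
  qed
  show ?thesis
  proof
    assume S: "selectively_pseudocompact (Disc X) X"
    show "selectively_pseudocompact (Nwd X) X"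
      unfolding selectively_pseudocompact_def
    proof (intro allI impI)
      fix U :: "nat \<Rightarrow> 'a set"
      assume HU: "(\<forall>n. openin X (U n) \<and> U n \<noteq> {}) \<and> (\<forall>m n. m \<noteq> n \<longrightarrow> U m \<inter> U n = {})"
      have "\<exists>A. (\<forall>n. A n \<in> Disc X \<and> A n \<subseteq> U n \<inter> D) \<and> (\<exists>x. accumulation_point_of_family X x A)"
        by (rule S[unfolded selectively_pseudocompact_def, rule_format, OF red[OF HU]])
      then obtain A x where A: "\<And>n. A n \<in> Disc X \<and> A n \<subseteq> U n \<inter> D"
        and x: "accumulation_point_of_family X x A" by blast
      have t1: "t1_space (subtopology X D)" using assms(4) metrizable_imp_t1_space by blast
      have "A n \<in> Nwd X" for n
      proof -
        have "A n \<subseteq> topspace X" "subtopology X (A n) = discrete_topology (A n)" "A n \<subseteq> D"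
          using A[of n] unfolding Disc_def by auto
        then show ?thesis using disc_imp_nwd[OF assms(1,2,3) t1] unfolding Nwd_def by blast
      qed
      then show "\<exists>A. (\<forall>n. A n \<in> Nwd X \<and> A n \<subseteq> U n) \<and> (\<exists>x. accumulation_point_of_family X x A)"
        using A x by blast
    qed
  next
    assume S: "selectively_pseudocompact (Nwd X) X"
    obtain M d where MS: "Metric_space M d" and MT: "Metric_space.mtopology M d = subtopology X D"
      using assms(4) unfolding metrizable_space_def by metis
    show "selectively_pseudocompact (Disc X) X"
      unfolding selectively_pseudocompact_def
    proof (intro allI impI)
      fix U :: "nat \<Rightarrow> 'a set"
      assume HU: "(\<forall>n. openin X (U n) \<and> U n \<noteq> {}) \<and> (\<forall>m n. m \<noteq> n \<longrightarrow> U m \<inter> U n = {})"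
      have "\<exists>A. (\<forall>n. A n \<in> Nwd X \<and> A n \<subseteq> U n \<inter> D) \<and> (\<exists>x. accumulation_point_of_family X x A)"
        by (rule S[unfolded selectively_pseudocompact_def, rule_format, OF red[OF HU]])
      then obtain A x where A: "\<And>n. A n \<in> Nwd X \<and> A n \<subseteq> U n \<inter> D"
        and x: "accumulation_point_of_family X x A" by blast
      have "\<exists>B \<subseteq> U n \<inter> D. B \<in> Disc X \<and> (\<forall>a\<in>A n. \<forall>W. openin X W \<and> a \<in> W \<longrightarrow> W \<inter> B \<noteq> {})" for n
      proof (rule nwd_to_disc[OF MS MT assms(2)])
        show "openin X (U n \<inter> D)" using HU assms(2) by blast
        show "U n \<inter> D \<subseteq> D" by blast
        show "A n \<subseteq> U n \<inter> D" using A by blast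
        show "X interior_of (X closure_of A n) = {}" using A[of n] unfolding Nwd_def by blast
      qed
      then obtain B where B: "\<And>n. B n \<subseteq> U n \<inter> D \<and> B n \<in> Disc X \<and> (\<forall>a\<in>A n. \<forall>W. openin X W \<and> a \<in> W \<longrightarrow> W \<inter> B n \<noteq> {})"
        by metis
      have "accumulation_point_of_family X x B"
        unfolding accumulation_point_of_family_def
      proof (intro conjI allI impI)
        show "x \<in> topspace X" using x unfolding accumulation_point_of_family_def by blast
        fix V assume V: "openin X V \<and> x \<in> V"
        have "infinite {n. V \<inter> A n \<noteq> {}}" using x V unfolding accumulation_point_of_family_def by blast
        moreover have "{n. V \<inter> A n \<noteq> {}} \<subseteq> {n. V \<inter> B n \<noteq> {}}" using B V by blast
        ultimately show "infinite {n. V \<inter> B n \<noteq> {}}" using infinite_super by blast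
      qed
      then show "\<exists>A. (\<forall>n. A n \<in> Disc X \<and> A n \<subseteq> U n) \<and> (\<exists>x. accumulation_point_of_family X x A)"
        using B by blast
    qed
  qed
qed

end
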